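(* Let $L:G\to\mathcal{L}$ be a friendly labeling function, $T$ a tree with root edge, and $e$ an interior edge of $T$. Let $\lambda^-\in{\rm im}(L^{T_{e,-}})$ and $\lambda^+\in{\rm im}(L^{T_{e,+}})$ with $\lambda^-(e)=\lambda^+(e)$. Then the labeling $\lambda:E(T)\to\mathcal{L}$ which agrees with $\lambda^-$ on the edges of $T_{e,-}$ and with $\lambda^+$ on the edges of $T_{e,+}$ is consistent, i.e. $\lambda\in{\rm im}(L^T)$.
   Context: Let $G$ be a finite abelian group written additively, $\mathcal{L}$ a finite set, $L:G\to\mathcal{L}$ a function. A tree with root edge is a finite tree $T$ with a distinguished leaf $\rho$; the edge at $\rho$ is the root edge. Every vertex $v\neq\rho$ has a unique parent edge (first edge on the path from $v$ to $\rho$); other edges at $v$ are child edges. Vertices that are neither $\rho$ nor leaves are interior vertices; an edge is interior if both endpoints are interior vertices. $E(T)$ is the edge set. An edge $e'$ is below $e$ if $e$ lies on the path from $\rho$ to $e'$ (so $e$ is below itself). A map $h:E(T)\to G$ is a consistent assignment if for every interior vertex $v$, $h(\text{parent edge of }v)=\sum h(\text{child edges of }v)$. ${\rm im}(L^T)=\{L\circ h: h\text{ consistent}\}\subseteq\mathcal{L}^{E(T)}$ is the set of consistent labelings. For an edge $e$, $T_{e,-}$ is the tree formed by all edges below $e$, regarded as a tree with root edge $e$ (distinguished leaf = endpoint of $e$ closer to $\rho$); $T_{e,+}$ is the tree formed by $e$ and all edges not below $e$, with the same $\rho$ (the endpoint of $e$ farther from $\rho$ becomes a leaf). Friendliness: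 for $m\ge3$ let $Z_m=\{(g_1,\dots,g_m)\in G^m: g_1+\cdots+g_{m-1}=g_m\}$ and $\widetilde{L}(g_1,\dots,g_m)=(L(g_1),\dots,L(g_m))$; $L$ is $m$-friendly if for every $l\in\widetilde{L}(Z_m)$ and every $i$, the set of $i$-th coordinates of elements of $\widetilde{L}^{-1}(l)$ equals $L^{-1}(l_i)$; $L$ is friendly if it is $m$-friendly for all $m\ge3$. *)

theory Defs
  imports Main
begin

definition vpath :: "'v set set \<Rightarrow> 'v list \<Rightarrow> bool" where
  "vpath E p \<longleftrightarrow> p \<noteq> [] \<and> distinct p \<and>
     (\<forall>i. Suc i < length p \<longrightarrow> {p ! i, p ! Suc i} \<in> E)"

definition pedges :: "'v list \<Rightarrow> 'v set set" where
  "pedges p = {{p ! i, p ! Suc i} | i. Suc i < length p}"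

definition is_tree :: "'v set \<Rightarrow> 'v set set \<Rightarrow> bool" where
  "is_tree V E \<longleftrightarrow> finite V \<and> V \<noteq> {} \<and>
     E \<subseteq> {{u, v} | u v. u \<in> V \<and> v \<in> V \<and> u \<noteq> v} \<and>
     (\<forall>u\<in>V. \<forall>v\<in>V. \<exists>p. vpath E p \<and> hd p = u \<and> last p = v) \<and>
     \<not> (\<exists>p. vpath E p \<and> length p \<ge> 3 \<and> {last p, hd p} \<in> E)"

definition degree :: "'v set set \<Rightarrow> 'v \<Rightarrow> nat" where
  "degree E v = card {e \<in> E. v \<in> e}"

text \<open>A tree with root edge: a finite tree with a distinguished leaf \<rho>.\<close>
definition is_rtree :: "'v set \<Rightarrow> 'v set set \<Rightarrow> 'v \<Rightarrow> bool" where
  "is_rtree V E \<rho> \<longleftrightarrow> is_tree V E \<and> \<rho> \<in> V \<and> degree E \<rho> = 1"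

definition is_parent_edge :: "'v set set \<Rightarrow> 'v \<Rightarrow> 'v \<Rightarrow> 'v set \<Rightarrow> bool" where
  "is_parent_edge E \<rho> v e \<longleftrightarrow> v \<noteq> \<rho> \<and>
     (\<exists>p. vpath E p \<and> hd p = v \<and> last p = \<rho> \<and> length p \<ge> 2 \<and> e = {p ! 0, p ! 1})"

definition child_edges :: "'v set set \<Rightarrow> 'v \<Rightarrow> 'v \<Rightarrow> 'v set set" where
  "child_edges E \<rho> v = {c \<in> E. v \<in> c \<and> \<not> is_parent_edge E \<rho> v c}"

definition interior_vertex :: "'v set \<Rightarrow> 'v set set \<Rightarrow> 'v \<Rightarrow> 'v \<Rightarrow> bool" where
  "interior_vertex V E \<rho> v \<longleftrightarrow> v \<in> V \<and> v \<noteq> \<rho> \<and> degree E v \<noteq> 1"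

definition interior_edge :: "'v set \<Rightarrow> 'v set set \<Rightarrow> 'v \<Rightarrow> 'v set \<Rightarrow> bool" where
  "interior_edge V E \<rho> e \<longleftrightarrow> e \<in> E \<and> (\<forall>v\<in>e. interior_vertex V E \<rho> v)"

definition below :: "'v set set \<Rightarrow> 'v \<Rightarrow> 'v set \<Rightarrow> 'v set \<Rightarrow> bool" where
  "below E \<rho> e e' \<longleftrightarrow> e' \<in> E \<and>
     (\<exists>p. vpath E p \<and> hd p = \<rho> \<and> length p \<ge> 2 \<and>
          e' = {p ! (length p - 2), last p} \<and> e \<in> pedges p)"

definition consistent_assignment ::
  "'v set \<Rightarrow> 'v set set \<Rightarrow> 'v \<Rightarrow> ('v set \<Rightarrow> 'g::comm_monoid_add) \<Rightarrow> bool" where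
  "consistent_assignment V E \<rho> h \<longleftrightarrow>
     (\<forall>v e. interior_vertex V E \<rho> v \<longrightarrow> e \<in> E \<longrightarrow> is_parent_edge E \<rho> v e \<longrightarrow>
        h e = (\<Sum>c\<in>child_edges E \<rho> v. h c))"

text \<open>\<open>\<lambda> \<in> im(L^T)\<close>: \<open>\<lambda>\<close> (on \<open>E(T)\<close>) equals \<open>L \<circ> h\<close> for some consistent \<open>h\<close>.\<close>
definition in_im ::
  "('g::comm_monoid_add \<Rightarrow> 'l) \<Rightarrow> 'v set \<Rightarrow> 'v set set \<Rightarrow> 'v \<Rightarrow> ('v set \<Rightarrow> 'l) \<Rightarrow> bool" where
  "in_im L V E \<rho> lam \<longleftrightarrow>
     (\<exists>h. consistent_assignment V E \<rho> h \<and> (\<forall>e\<in>E. lam e = L (h e)))"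

section \<open>The subtrees \<open>T_{e,-}\<close> and \<open>T_{e,+}\<close>\<close>

definition minus_edges :: "'v set set \<Rightarrow> 'v \<Rightarrow> 'v set \<Rightarrow> 'v set set" where
  "minus_edges E \<rho> e = {e' \<in> E. below E \<rho> e e'}"

definition near_end :: "'v set set \<Rightarrow> 'v \<Rightarrow> 'v set \<Rightarrow> 'v" where
  "near_end E \<rho> e = (THE a. a \<in> e \<and>
     (\<exists>p. vpath E p \<and> hd p = \<rho> \<and> last p = a \<and> e \<notin> pedges p))"

definition plus_edges :: "'v set set \<Rightarrow> 'v \<Rightarrow> 'v set \<Rightarrow> 'v set set" where
  "plus_edges E \<rho> e = insert e {e' \<in> E. \<not> below E \<rho> e e'}"

definition Zm :: "nat \<Rightarrow> 'g::ab_group_add list set" where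
  "Zm m = {gs. length gs = m \<and> sum_list (butlast gs) = last gs}"

definition m_friendly :: "nat \<Rightarrow> ('g::ab_group_add \<Rightarrow> 'l) \<Rightarrow> bool" where
  "m_friendly m L \<longleftrightarrow>
     (\<forall>l \<in> map L ` Zm m. \<forall>i < m.
        {gs ! i | gs. gs \<in> Zm m \<and> map L gs = l} = {g. L g = l ! i})"

definition friendly :: "('g::ab_group_add \<Rightarrow> 'l) \<Rightarrow> bool" where
  "friendly L \<longleftrightarrow> (\<forall>m \<ge> 3. m_friendly m L)"

end

theory Submission
  imports Defs
begin



lemma vpath_Nil[simp]: "\<not> vpath E []"
  by (simp add: vpath_def)

lemma vpath_single[simp]: "vpath E [x]"
  by (simp add: vpath_def)

lemma vpath_Cons2: "vpath E (x # y # zs) \<longleftrightarrow> {x,y} \<in> E \<and> x \<notin> set (y # zs) \<and> vpath E (y # zs)"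
proof
  assume h: "vpath E (x # y # zs)"
  then show "{x,y} \<in> E \<and> x \<notin> set (y # zs) \<and> vpath E (y # zs)"
    unfolding vpath_def
    by (metis Suc_less_eq distinct.simps(2) length_Cons list.distinct(1) nth_Cons_0 nth_Cons_Suc zero_less_Suc)
next
  assume h: "{x,y} \<in> E \<and> x \<notin> set (y # zs) \<and> vpath E (y # zs)"
  show "vpath E (x # y # zs)"
    unfolding vpath_def
  proof (intro conjI allI impI)
    fix i assume "Suc i < length (x # y # zs)"
    then show "{(x # y # zs) ! i, (x # y # zs) ! Suc i} \<in> E"
      using h unfolding vpath_def by (cases i) auto
  qed (use h in \<open>auto simp: vpath_def\<close>)
qed

lemma vpath_append:
  assumes "xs \<noteq> []" "ys \<noteq> []"
  shows "vpath E (xs @ ys) \<longleftrightarrow> vpath E xs \<and> vpath E ys \<and> set xs \<inter> set ys = {} \<and> {last xs, hd ys} \<in> E"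
  using assms
proof (induction xs rule: induct_list012)
  case (2 x)
  then show ?case by (cases ys) (auto simp: vpath_Cons2)
next
  case (3 x y zs)
  then show ?case by (auto simp: vpath_Cons2)
qed simp

lemma vpath_prefix: "vpath E (xs @ ys) \<Longrightarrow> xs \<noteq> [] \<Longrightarrow> vpath E xs"
  by (cases "ys = []") (auto simp: vpath_append)

lemma vpath_suffix: "vpath E (xs @ ys) \<Longrightarrow> ys \<noteq> [] \<Longrightarrow> vpath E ys"
  by (cases "xs = []") (auto simp: vpath_append)

lemma vpath_rev: "vpath E xs \<Longrightarrow> vpath E (rev xs)"
proof (induction xs)
  case (Cons x xs)
  show ?case
  proof (cases "xs = []")
    case False
    then obtain y ys where xs: "xs = y # ys" by (cases xs) auto
    have "vpath E (rev xs @ [x])"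
      using Cons xs by (subst vpath_append) (auto simp: vpath_Cons2 insert_commute hd_rev last_rev)
    then show ?thesis by simp
  qed simp
qed simp

lemma vpath_mono: "vpath E p \<Longrightarrow> E \<subseteq> E' \<Longrightarrow> vpath E' p"
  by (auto simp: vpath_def)

lemma pedges_Nil[simp]: "pedges [] = {}" and pedges_single[simp]: "pedges [x] = {}"
  by (auto simp: pedges_def)

lemma pedges_Cons2: "pedges (x # y # zs) = insert {x,y} (pedges (y # zs))"
proof (rule set_eqI, rule iffI)
  fix c assume "c \<in> pedges (x # y # zs)"
  then obtain i where i: "c = {(x # y # zs) ! i, (x # y # zs) ! Suc i}" "Suc i < length (x # y # zs)"
    by (auto simp: pedges_def)
  show "c \<in> insert {x,y} (pedges (y # zs))"
  proof (cases i)
    case 0 then show ?thesis using i by simp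
  next
    case (Suc j) then show ?thesis using i unfolding pedges_def by auto
  qed
next
  fix c assume "c \<in> insert {x,y} (pedges (y # zs))"
  then show "c \<in> pedges (x # y # zs)"
  proof
    assume "c = {x,y}"
    then have "c = {(x # y # zs) ! 0, (x # y # zs) ! Suc 0} \<and> Suc 0 < length (x # y # zs)" by simp
    then show ?thesis unfolding pedges_def by blast
  next
    assume "c \<in> pedges (y # zs)"
    then obtain j where j: "c = {(y # zs) ! j, (y # zs) ! Suc j}" "Suc j < length (y # zs)"
      by (auto simp: pedges_def)
    then have "c = {(x # y # zs) ! Suc j, (x # y # zs) ! Suc (Suc j)} \<and> Suc (Suc j) < length (x # y # zs)" by simp
    then show ?thesis unfolding pedges_def by blast
  qed
qed

lemma vpath_pedges: "vpath E p \<Longrightarrow> pedges p \<subseteq> E' \<Longrightarrow> vpath E' p"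
  by (auto simp: vpath_def pedges_def)

lemma vpath_pedges_sub: "vpath E p \<Longrightarrow> pedges p \<subseteq> E"
  by (auto simp: vpath_def pedges_def)

lemma path_unique:
  assumes acyc: "\<not> (\<exists>p. vpath E p \<and> length p \<ge> 3 \<and> {last p, hd p} \<in> E)"
  shows "vpath E p \<Longrightarrow> vpath E q \<Longrightarrow> hd p = hd q \<Longrightarrow> last p = last q \<Longrightarrow> p = q"
proof (induction p arbitrary: q)
  case Nil then show ?case by simp
next
  case (Cons x p')
  from Cons.prems obtain q' where q: "q = x # q'" by (cases q) auto
  show ?case
  proof (cases "p' = []")
    case True
    show ?thesis
    proof (rule ccontr)
      assume "x # p' \<noteq> q"
      then have "q' \<noteq> []" using True q by auto
      then have "last q \<in> set q'" using q by simp
      moreover have "last q = x" using Cons.prems True by simp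
      moreover have "x \<notin> set q'" using Cons.prems(2) q \<open>q' \<noteq> []\<close>
        by (cases q') (auto simp: vpath_Cons2)
      ultimately show False by simp
    qed
  next
    case False
    then obtain y p'' where p': "p' = y # p''" by (cases p') auto
    have "q' \<noteq> []"
    proof
      assume "q' = []"
      then have "last p' = x" using Cons.prems q False by simp
      moreover have "x \<notin> set p'" using Cons.prems(1) p' by (auto simp: vpath_Cons2)
      ultimately show False using False last_in_set by metis
    qed
    then obtain z q'' where q': "q' = z # q''" by (cases q') auto
    have vp': "vpath E p'" and vq': "vpath E q'" using Cons.prems p' q q' by (auto simp: vpath_Cons2)
    have xn: "x \<notin> set p'" "x \<notin> set q'" using Cons.prems p' q q' by (auto simp: vpath_Cons2)
    have exz: "{x, z} \<in> E" using Cons.prems q q' by (auto simp: vpath_Cons2)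
    have lastpq: "last p' = last q'" using Cons.prems q \<open>q' \<noteq> []\<close> False by simp
    show ?thesis
    proof (cases "y = z")
      case True
      then have "p' = q'" using Cons.IH[OF vp' vq'] p' q' lastpq by simp
      then show ?thesis using q by simp
    next
      case yz: False
      have "\<exists>u\<in>set p'. u \<in> set q'" using lastpq False \<open>q' \<noteq> []\<close> by (metis last_in_set)
      then obtain p1 m p2 where sp: "p' = p1 @ m # p2" "m \<in> set q'" "\<forall>u\<in>set p1. u \<notin> set q'"
        using split_list_first_prop[of p' "\<lambda>u. u \<in> set q'"] by blast
      obtain q1 q2 where sq: "q' = q1 @ m # q2" using sp(2) split_list by metis
      define c where "c = (x # p1 @ [m]) @ rev q1"
      have v1: "vpath E (x # p1 @ [m])"
        using vpath_prefix[of E "x # p1 @ [m]" p2] Cons.prems(1) sp(1) by simp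
      have dq: "distinct q'" using vq' by (simp add: vpath_def)
      have "vpath E c"
      proof (cases "q1 = []")
        case True then show ?thesis using v1 by (simp add: c_def)
      next
        case q1ne: False
        have "vpath E q1" using vpath_prefix[of E q1 "m # q2"] vq' sq q1ne by simp
        then have "vpath E (rev q1)" by (rule vpath_rev)
        moreover have "{last q1, m} \<in> E"
          using vpath_append[of q1 "m # q2" E] vq' sq q1ne by simp
        moreover have "set (x # p1 @ [m]) \<inter> set q1 = {}"
          using xn sp sq dq by auto
        ultimately show ?thesis unfolding c_def using v1 q1ne
          by (subst vpath_append) (auto simp: hd_rev insert_commute)
      qed
      moreover have "length c \<ge> 3"
      proof (cases "q1 = []")
        case True
        then have "m = z" using sq q' by simp
        then have "p1 \<noteq> []" using yz sp(1) p' by auto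
        then have "length p1 \<ge> 1" by (cases p1) auto
        then show ?thesis by (simp add: c_def)
      next
        case False then have "length q1 \<ge> 1" by (cases q1) auto
        then show ?thesis by (simp add: c_def)
      qed
      moreover have "{last c, hd c} \<in> E"
      proof -
        have "last c = z" using sq q' by (cases q1) (auto simp: c_def last_rev)
        then show ?thesis using exz by (simp add: c_def insert_commute)
      qed
      ultimately show ?thesis using acyc by blast
    qed
  qed
qed




lemma vpath_set_edges: "vpath E p \<Longrightarrow> length p \<ge> 2 \<Longrightarrow> set p \<subseteq> \<Union>E"
proof
  fix x assume vp: "vpath E p" and l: "length p \<ge> 2" and "x \<in> set p"
  then obtain i where i: "i < length p" "x = p ! i" by (auto simp: in_set_conv_nth)
  show "x \<in> \<Union>E"
  proof (cases "Suc i < length p")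
    case True
    then have "{p ! i, p ! Suc i} \<in> E" using vp by (simp add: vpath_def)
    then show ?thesis using i by blast
  next
    case False
    then have "Suc (i - 1) < length p" "Suc (i - 1) = i" using i l by auto
    then have "{p ! (i - 1), p ! i} \<in> E" using vp unfolding vpath_def by metis
    then show ?thesis using i by blast
  qed
qed

lemma nth_len2: "length p \<ge> 2 \<Longrightarrow> p ! (length p - 2) = last (butlast p)"
proof -
  assume l: "length p \<ge> 2"
  then have "butlast p \<noteq> []" by (cases p rule: rev_cases) auto
  then have "last (butlast p) = butlast p ! (length (butlast p) - 1)" by (rule last_conv_nth)
  also have "\<dots> = p ! (length p - 2)" using l by (simp add: nth_butlast numeral_2_eq_2)
  finally show ?thesis by simp
qed

locale rt =
  fixes V :: "'v set" and E :: "'v set set" and \<rho> :: 'v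
  assumes tree: "is_tree V E" and rho: "\<rho> \<in> V"
begin

lemma acyc: "\<not> (\<exists>p. vpath E p \<and> length p \<ge> 3 \<and> {last p, hd p} \<in> E)"
  using tree by (simp add: is_tree_def)

lemma EV: "\<Union>E \<subseteq> V"
  using tree by (auto simp: is_tree_def)

lemma finV: "finite V"
  using tree by (simp add: is_tree_def)

lemma edge_form: "c \<in> E \<Longrightarrow> \<exists>x y. c = {x,y} \<and> x \<in> V \<and> y \<in> V \<and> x \<noteq> y"
  using tree by (auto simp: is_tree_def)

lemma finE: "finite E"
proof -
  have "E \<subseteq> Pow V" using EV by auto
  then show ?thesis using finV finite_subset by blast
qed

lemma connected: "u \<in> V \<Longrightarrow> v \<in> V \<Longrightarrow> \<exists>p. vpath E p \<and> hd p = u \<and> last p = v"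
  using tree by (simp add: is_tree_def)

lemma vpath_V: "vpath E p \<Longrightarrow> hd p \<in> V \<Longrightarrow> set p \<subseteq> V"
proof -
  assume vp: "vpath E p" and h: "hd p \<in> V"
  show ?thesis
  proof (cases "length p \<ge> 2")
    case True then show ?thesis using vpath_set_edges[OF vp] EV by blast
  next
    case False
    then have "p = [hd p]" using vp by (cases p) (auto simp: vpath_def Suc_le_eq)
    then show ?thesis using h by (metis empty_set insert_subset list.simps(15) empty_subsetI)
  qed
qed

lemma uniq: "vpath E p \<Longrightarrow> vpath E q \<Longrightarrow> hd p = hd q \<Longrightarrow> last p = last q \<Longrightarrow> p = q"
  using path_unique[OF acyc] by blast

definition pth :: "'v \<Rightarrow> 'v list" where
  "pth v = (THE p. vpath E p \<and> hd p = \<rho> \<and> last p = v)"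

lemma pth: assumes "v \<in> V" shows "vpath E (pth v)" "hd (pth v) = \<rho>" "last (pth v) = v"
proof -
  obtain p where p: "vpath E p \<and> hd p = \<rho> \<and> last p = v" using connected[OF rho assms] by blast
  have "vpath E (pth v) \<and> hd (pth v) = \<rho> \<and> last (pth v) = v"
    unfolding pth_def by (rule theI[of _ p]) (use p uniq in auto)
  then show "vpath E (pth v)" "hd (pth v) = \<rho>" "last (pth v) = v" by auto
qed

lemma pth_eq: assumes "vpath E p" "hd p = \<rho>" shows "pth (last p) = p"
proof -
  have "p \<noteq> []" using assms by auto
  then have "last p \<in> V" using vpath_V[OF assms(1)] assms rho by auto
  then show ?thesis using pth[of "last p"] uniq assms by metis
qed

lemma pth_rho: "pth \<rho> = [\<rho>]"
  using pth_eq[of "[\<rho>]"] by simp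

lemma pth_ne: "v \<in> V \<Longrightarrow> pth v \<noteq> []"
  using pth(1) vpath_Nil by metis

lemma pth_set: "v \<in> V \<Longrightarrow> set (pth v) \<subseteq> V"
  using pth vpath_V rho by metis

lemma pth_distinct: "v \<in> V \<Longrightarrow> distinct (pth v)"
  using pth(1) by (simp add: vpath_def)

lemma pth_prefix: assumes "v \<in> V" "pth v = xs @ y # ys" shows "pth y = xs @ [y]"
proof -
  have "vpath E (xs @ [y])" using vpath_prefix[of E "xs @ [y]" ys] pth(1)[OF assms(1)] assms(2) by simp
  moreover have "hd (xs @ [y]) = \<rho>" using pth(2)[OF assms(1)] assms(2) by (cases xs) auto
  ultimately show ?thesis using pth_eq by fastforce
qed

lemma anc_prefix: assumes "v \<in> V" "y \<in> set (pth v)" shows "\<exists>ys. pth v = pth y @ ys"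
proof -
  obtain xs ys where "pth v = xs @ y # ys" using assms(2) split_list by metis
  then show ?thesis using pth_prefix[OF assms(1)] by auto
qed

lemma anc_V: "v \<in> V \<Longrightarrow> y \<in> set (pth v) \<Longrightarrow> y \<in> V"
  using pth_set by blast

lemma anc_trans: "v \<in> V \<Longrightarrow> y \<in> set (pth v) \<Longrightarrow> set (pth y) \<subseteq> set (pth v)"
  using anc_prefix by fastforce

lemma self_in_pth: "v \<in> V \<Longrightarrow> v \<in> set (pth v)"
  using pth(3) pth_ne last_in_set by metis

lemma anc_len: assumes "v \<in> V" "y \<in> set (pth v)" "y \<noteq> v" shows "length (pth y) < length (pth v)"
proof -
  obtain ys where ys: "pth v = pth y @ ys" using anc_prefix assms by blast
  have "y \<in> V" using anc_V assms by blast
  have "ys \<noteq> []" using ys pth(3)[OF assms(1)] pth(3)[OF \<open>y \<in> V\<close>] assms(3) by auto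
  then show ?thesis using ys by simp
qed

lemma anc_antisym: "v \<in> V \<Longrightarrow> y \<in> V \<Longrightarrow> y \<in> set (pth v) \<Longrightarrow> v \<in> set (pth y) \<Longrightarrow> y = v"
  using anc_len less_asym by metis

definition par :: "'v \<Rightarrow> 'v" where
  "par v = last (butlast (pth v))"

lemma pth_par: assumes "v \<in> V" "v \<noteq> \<rho>" shows "pth v = pth (par v) @ [v]" "par v \<in> V"
proof -
  have ne: "pth v \<noteq> []" using pth_ne assms by auto
  have "butlast (pth v) \<noteq> []"
  proof
    assume "butlast (pth v) = []"
    then have "pth v = [v]" using ne pth(3)[OF assms(1)] by (metis append_butlast_last_id append_Nil)
    then show False using pth(2)[OF assms(1)] assms(2) by simp
  qed
  then have pv: "pth v = butlast (butlast (pth v)) @ par v # [v]"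
    unfolding par_def using ne pth(3)[OF assms(1)]
    by (metis append_butlast_last_id append_Cons append_assoc append_Nil)
  then have "pth (par v) = butlast (butlast (pth v)) @ [par v]"
    using pth_prefix[OF assms(1)] by blast
  then show "pth v = pth (par v) @ [v]"
    using pv by simp
  have "par v \<in> set (pth v)" by (subst pv) simp
  then show "par v \<in> V" using pth_set[OF assms(1)] by blast
qed

lemma par_in_pth: "v \<in> V \<Longrightarrow> v \<noteq> \<rho> \<Longrightarrow> par v \<in> set (pth v)"
  using pth_par self_in_pth by (metis Un_iff set_append)

lemma not_in_pth_par: "v \<in> V \<Longrightarrow> v \<noteq> \<rho> \<Longrightarrow> v \<notin> set (pth (par v))"
  using pth_par pth_distinct by (metis distinct_append not_distinct_conv_prefix)

lemma par_neq: "v \<in> V \<Longrightarrow> v \<noteq> \<rho> \<Longrightarrow> par v \<noteq> v"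
  using not_in_pth_par self_in_pth pth_par(2) by metis

lemma edge_par: assumes "v \<in> V" "v \<noteq> \<rho>" shows "{par v, v} \<in> E"
proof -
  have "vpath E (pth (par v) @ [v])" using pth_par assms pth(1) by metis
  then show ?thesis using vpath_append[of "pth (par v)" "[v]" E] pth_ne pth(3) pth_par(2)[OF assms] by simp
qed

lemma par_edge_inj:
  assumes "v \<in> V" "v \<noteq> \<rho>" "w \<in> V" "w \<noteq> \<rho>" "{par v, v} = {par w, w}" shows "v = w"
proof (rule ccontr)
  assume "v \<noteq> w"
  then have "v = par w" "w = par v" using assms(5) by (auto simp: doubleton_eq_iff)
  have "v \<in> set (pth w)" using par_in_pth[OF assms(3,4)] \<open>v = par w\<close> by simp
  moreover have "w \<in> set (pth v)" using par_in_pth[OF assms(1,2)] \<open>w = par v\<close> by simp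
  ultimately show False using anc_antisym assms \<open>v \<noteq> w\<close> by metis
qed

lemma edge_cases: assumes "c \<in> E" shows "\<exists>w\<in>V. w \<noteq> \<rho> \<and> c = {par w, w}"
proof -
  obtain x y where c: "c = {x,y}" "x \<in> V" "y \<in> V" "x \<noteq> y" using edge_form[OF assms] by blast
  have key: "\<exists>w\<in>V. w \<noteq> \<rho> \<and> c = {par w, w}" if "y \<notin> set (pth x)" "c = {x,y}" "x \<in> V" "y \<in> V" for x y
  proof -
    have "vpath E (pth x @ [y])"
      using vpath_append[of "pth x" "[y]" E] pth[OF that(3)] pth_ne[OF that(3)] that assms
      by (auto simp: insert_commute)
    then have py: "pth y = pth x @ [y]" using pth_eq pth(2)[OF that(3)] pth_ne[OF that(3)]
      by (metis hd_append2 last_snoc)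
    then have "y \<noteq> \<rho>" using pth_rho pth_ne[OF that(3)] by (metis append_Nil2 append_self_conv2 butlast_snoc list.sel(3))
    then have "par y = x" using py pth_par[OF that(4)] pth(3) that(3) pth_par(2) by (metis butlast_snoc)
    then show ?thesis using that \<open>y \<noteq> \<rho>\<close> by (auto simp: insert_commute)
  qed
  show ?thesis
  proof (cases "y \<in> set (pth x)")
    case False then show ?thesis using key c by blast
  next
    case True
    then have "x \<notin> set (pth y)" using anc_antisym c by blast
    have "c = {y, x}" using c by (simp add: insert_commute)
    then show ?thesis using key[OF \<open>x \<notin> set (pth y)\<close> _ c(3) c(2)] by blast
  qed
qed

lemma pedges_pth: "v \<in> V \<Longrightarrow> pth v = xs @ s \<Longrightarrow> pedges s = (\<lambda>z. {par z, z}) ` set (tl s)"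
proof (induction s arbitrary: xs rule: induct_list012)
  case (3 y z zs)
  have vV: "v \<in> V" using "3.prems" by simp
  have "pth v = (xs @ [y]) @ z # zs" using "3.prems" by simp
  then have pz: "pth z = xs @ [y, z]" using pth_prefix[OF vV, of "xs @ [y]" z zs] by simp
  have zV: "z \<in> V" using "3.prems" pth_set[OF vV] by auto
  have "z \<noteq> \<rho>" using pz pth_rho by auto
  have "pth (par z) @ [z] = (xs @ [y]) @ [z]" using pz pth_par(1)[OF zV \<open>z \<noteq> \<rho>\<close>] by simp
  then have "pth (par z) = xs @ [y]" by simp
  then have "last (pth (par z)) = y" by simp
  then have "par z = y" using pth(3)[OF pth_par(2)[OF zV \<open>z \<noteq> \<rho>\<close>]] by simp
  then show ?case using "3.IH"(2)[of "xs @ [y]"] \<open>pth v = (xs @ [y]) @ z # zs\<close> vV by (simp add: pedges_Cons2)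
qed auto

end



context rt begin

definition Ch :: "'v \<Rightarrow> 'v set" where
  "Ch v = {w \<in> V. w \<noteq> \<rho> \<and> par w = v}"

definition cons_at :: "('v set \<Rightarrow> 'g::comm_monoid_add) \<Rightarrow> 'v \<Rightarrow> bool" where
  "cons_at h v \<longleftrightarrow> (Ch v \<noteq> {} \<longrightarrow> h {par v, v} = (\<Sum>w\<in>Ch v. h {v, w}))"

lemma finite_Ch: "finite (Ch v)"
  using finV by (simp add: Ch_def)

lemma Ch_edge: "w \<in> Ch v \<Longrightarrow> {v, w} = {par w, w} \<and> {v, w} \<in> E"
  using edge_par by (auto simp: Ch_def)

lemma Ch_neq: "w \<in> Ch v \<Longrightarrow> w \<noteq> v"
  unfolding Ch_def using par_neq by fastforce

lemma inj_Ch: "inj_on (\<lambda>w. {v, w}) (Ch v)"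
proof (rule inj_onI)
  fix w w' assume w: "w \<in> Ch v" "w' \<in> Ch v" "{v, w} = {v, w'}"
  then have "w \<in> {v, w'}" by blast
  then show "w = w'" using Ch_neq[OF w(1)] by blast
qed

lemma par_edge_notin_Ch: "v \<in> V \<Longrightarrow> v \<noteq> \<rho> \<Longrightarrow> {par v, v} \<notin> (\<lambda>w. {v, w}) ` Ch v"
proof
  assume v: "v \<in> V" "v \<noteq> \<rho>" and "{par v, v} \<in> (\<lambda>w. {v, w}) ` Ch v"
  then obtain w where w: "w \<in> Ch v" "{par v, v} = {v, w}" by auto
  then have "{par v, v} = {par w, w}" using Ch_edge by metis
  moreover have "w \<in> V" "w \<noteq> \<rho>" using w(1) by (auto simp: Ch_def)
  ultimately have "w = v" using par_edge_inj[OF v(1,2)] by metis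
  then show False using Ch_neq w by blast
qed

lemma incident: assumes "v \<in> V"
  shows "{c \<in> E. v \<in> c} = (if v = \<rho> then {} else {{par v, v}}) \<union> (\<lambda>w. {v, w}) ` Ch v"
proof (rule set_eqI, rule iffI)
  fix c assume c: "c \<in> {c \<in> E. v \<in> c}"
  then obtain w where w: "w \<in> V" "w \<noteq> \<rho>" "c = {par w, w}" using edge_cases by blast
  show "c \<in> (if v = \<rho> then {} else {{par v, v}}) \<union> (\<lambda>w. {v, w}) ` Ch v"
  proof (cases "v = w")
    case True then show ?thesis using w by auto
  next
    case False
    then have "v = par w" using c w by auto
    then have "w \<in> Ch v" using w by (auto simp: Ch_def)
    then show ?thesis using w \<open>v = par w\<close> by auto
  qed
next
  fix c assume "c \<in> (if v = \<rho> then {} else {{par v, v}}) \<union> (\<lambda>w. {v, w}) ` Ch v"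
  then show "c \<in> {c \<in> E. v \<in> c}"
  proof
    assume "c \<in> (if v = \<rho> then {} else {{par v, v}})"
    then show ?thesis using edge_par assms by (auto split: if_splits)
  next
    assume "c \<in> (\<lambda>w. {v, w}) ` Ch v"
    then obtain w where "w \<in> Ch v" "c = {v, w}" by blast
    then have "c \<in> E" "v \<in> c" using Ch_edge[of w v] by auto
    then show ?thesis by simp
  qed
qed

lemma degree_eq: assumes "v \<in> V" shows "degree E v = (if v = \<rho> then 0 else 1) + card (Ch v)"
proof -
  have "card ((\<lambda>w. {v, w}) ` Ch v) = card (Ch v)" using inj_Ch card_image by blast
  then show ?thesis unfolding degree_def incident[OF assms]
    using par_edge_notin_Ch[OF assms] finite_Ch by (auto simp: card_insert_if)
qed

lemma interior_iff: "interior_vertex V E \<rho> v \<longleftrightarrow> v \<in> V \<and> v \<noteq> \<rho> \<and> Ch v \<noteq> {}"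
  using degree_eq finite_Ch by (auto simp: interior_vertex_def)

lemma parent_sub_a:
  assumes "E' \<subseteq> E" "r \<in> V" "set (butlast (pth r)) \<inter> \<Union>E' = {}" "is_parent_edge E' r v c"
  shows "v \<in> V \<and> v \<noteq> \<rho> \<and> c = {par v, v}"
proof -
  obtain q where q: "vpath E' q" "hd q = v" "last q = r" "length q \<ge> 2" "c = {q ! 0, q ! 1}"
    using assms(4) by (auto simp: is_parent_edge_def)
  obtain u q2 where q2: "q = v # u # q2" using q by (cases q; cases "tl q") auto
  have sq: "set q \<subseteq> \<Union>E'" using vpath_set_edges q by blast
  have vq: "vpath E (rev q)" using vpath_rev vpath_mono q assms(1) by blast
  define P where "P = butlast (pth r) @ rev q"
  have vP: "vpath E P"
  proof (cases "butlast (pth r) = []")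
    case True then show ?thesis using vq by (simp add: P_def)
  next
    case False
    have pr: "pth r = butlast (pth r) @ [r]" using pth(3)[OF assms(2)] pth_ne[OF assms(2)]
      by (metis append_butlast_last_id)
    have "vpath E (butlast (pth r))" using vpath_prefix[of E "butlast (pth r)" "[r]"] pr pth(1)[OF assms(2)] False by metis
    moreover have "{last (butlast (pth r)), r} \<in> E"
    proof -
      have "vpath E (butlast (pth r) @ [r])" using pr pth(1)[OF assms(2)] by metis
      then show ?thesis using vpath_append[of "butlast (pth r)" "[r]" E] False by simp
    qed
    moreover have "hd (rev q) = r" using q by (simp add: hd_rev)
    ultimately show ?thesis unfolding P_def using vq False assms(3) sq q2
      by (subst vpath_append) auto
  qed
  have hP: "hd P = \<rho>"
  proof (cases "butlast (pth r) = []")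
    case True
    then have "pth r = [r]" using pth(3)[OF assms(2)] pth_ne[OF assms(2)] by (metis append_butlast_last_id append_Nil)
    then have "r = \<rho>" using pth(2)[OF assms(2)] by simp
    then show ?thesis using True q by (simp add: P_def hd_rev)
  next
    case False
    then show ?thesis using pth(2)[OF assms(2)] pth_ne[OF assms(2)] unfolding P_def
      by (metis append_butlast_last_id hd_append2)
  qed
  have lP: "last P = v" using q2 by (simp add: P_def)
  have pv: "pth v = P" using pth_eq[OF vP hP] lP by simp
  have vV: "v \<in> V" using vpath_V[OF vP] hP rho lP vP by (metis last_in_set subsetD vpath_Nil)
  have P2: "P = (butlast (pth r) @ rev q2 @ [u]) @ [v]" using q2 by (simp add: P_def)
  have "v \<noteq> \<rho>"
  proof
    assume "v = \<rho>"
    then have "P = [\<rho>]" using pv pth_rho by simp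
    then show False using P2 by simp
  qed
  moreover have "par v = u"
  proof -
    have "butlast P = butlast (pth r) @ rev q2 @ [u]" using P2 by (metis butlast_snoc append_assoc)
    then show ?thesis unfolding par_def pv by simp
  qed
  ultimately show ?thesis using vV q q2 by auto
qed

lemma parent_sub_b:
  assumes "v \<in> V" "v \<noteq> r" "pth v = xs @ s" "s \<noteq> []" "hd s = r" "pedges s \<subseteq> E'"
  shows "is_parent_edge E' r v {par v, v}"
proof -
  have "vpath E s" using vpath_suffix pth(1)[OF assms(1)] assms(3,4) by metis
  then have vs: "vpath E' s" using vpath_pedges assms(6) by blast
  have ls: "last s = v" using pth(3)[OF assms(1)] assms(3,4) by simp
  have l2: "length s \<ge> 2"
  proof (rule ccontr)
    assume "\<not> length s \<ge> 2"
    then have "s = [hd s]" using assms(4) by (cases s) (auto simp: Suc_le_eq)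
    then show False using ls assms(2,5) by (metis last.simps)
  qed
  have pv: "par v = last (butlast s)" unfolding par_def assms(3)
    using l2 by (cases s rule: rev_cases) (auto simp: butlast_append last_append Suc_le_eq)
  have "rev s ! 1 = s ! (length s - 2)" using l2 by (simp add: rev_nth numeral_2_eq_2)
  then have r1: "rev s ! 1 = par v" using nth_len2[OF l2] pv by simp
  have r0: "rev s ! 0 = v" using ls assms(4) by (simp add: rev_nth last_conv_nth)
  show ?thesis unfolding is_parent_edge_def
    using assms(2) vpath_rev[OF vs] assms(4,5) ls l2 r0 r1
    by (intro conjI exI[of _ "rev s"]) (auto simp: hd_rev last_rev insert_commute)
qed

lemma parent_iff_T: "is_parent_edge E \<rho> v c \<longleftrightarrow> v \<in> V \<and> v \<noteq> \<rho> \<and> c = {par v, v}"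
proof
  assume "is_parent_edge E \<rho> v c"
  then show "v \<in> V \<and> v \<noteq> \<rho> \<and> c = {par v, v}" using parent_sub_a[of E \<rho>] rho pth_rho by simp
next
  assume a: "v \<in> V \<and> v \<noteq> \<rho> \<and> c = {par v, v}"
  then show "is_parent_edge E \<rho> v c"
    using parent_sub_b[of v \<rho> "[]" "pth v" E] pth[of v] pth_ne[of v] vpath_pedges_sub by auto
qed

lemma child_edges_T: assumes "v \<in> V" "v \<noteq> \<rho>"
  shows "child_edges E \<rho> v = (\<lambda>w. {v, w}) ` Ch v"
proof -
  have "child_edges E \<rho> v = {c \<in> E. v \<in> c} - {{par v, v}}"
    unfolding child_edges_def parent_iff_T using assms by auto
  then show ?thesis using incident[OF assms(1)] assms par_edge_notin_Ch[OF assms] by auto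
qed

lemma sum_children: "v \<in> V \<Longrightarrow> v \<noteq> \<rho> \<Longrightarrow> sum h (child_edges E \<rho> v) = (\<Sum>w\<in>Ch v. h {v, w})"
  using child_edges_T sum.reindex[OF inj_Ch] by (simp add: comp_def)

lemma cons_consistent: assumes "\<forall>v\<in>V. v \<noteq> \<rho> \<longrightarrow> cons_at h v" shows "consistent_assignment V E \<rho> h"
  unfolding consistent_assignment_def
proof (intro allI impI)
  fix v e assume "interior_vertex V E \<rho> v" "e \<in> E" "is_parent_edge E \<rho> v e"
  then have v: "v \<in> V" "v \<noteq> \<rho>" "Ch v \<noteq> {}" "e = {par v, v}" using interior_iff parent_iff_T by auto
  then have "h e = (\<Sum>w\<in>Ch v. h {v, w})" using assms unfolding cons_at_def by auto
  moreover have "sum h (child_edges E \<rho> v) = (\<Sum>w\<in>Ch v. h {v, w})" by (rule sum_children[OF v(1,2)])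
  ultimately show "h e = sum h (child_edges E \<rho> v)" by simp
qed

lemma sub_cons:
  assumes "E' \<subseteq> E" "consistent_assignment V' E' r h" "v \<in> V" "v \<noteq> \<rho>" "v \<in> V'" "v \<noteq> r"
    and inc: "{c \<in> E'. v \<in> c} = {c \<in> E. v \<in> c}"
    and pe: "\<And>c. is_parent_edge E' r v c \<longleftrightarrow> c = {par v, v}"
  shows "cons_at h v"
  unfolding cons_at_def
proof
  assume ne: "Ch v \<noteq> {}"
  have "degree E' v = degree E v" unfolding degree_def inc ..
  then have int: "interior_vertex V' E' r v"
    using assms(3-6) ne interior_iff unfolding interior_vertex_def by auto
  have "{par v, v} \<in> E'" using inc edge_par assms(3,4) by blast
  then have "h {par v, v} = sum h (child_edges E' r v)"
    using assms(2) int pe unfolding consistent_assignment_def by blast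
  also have "child_edges E' r v = child_edges E \<rho> v"
    unfolding child_edges_def pe parent_iff_T using inc assms(3,4) by blast
  finally show "h {par v, v} = (\<Sum>w\<in>Ch v. h {v, w})" using sum_children assms(3,4) by simp
qed

lemma cons_at_cong:
  "h {par v, v} = h' {par v, v} \<Longrightarrow> (\<And>w. w \<in> Ch v \<Longrightarrow> h {v, w} = h' {v, w}) \<Longrightarrow> cons_at h v = cons_at h' v"
  unfolding cons_at_def by (metis (no_types, lifting) sum.cong)

end



context rt begin

definition Desc :: "'v \<Rightarrow> 'v set" where
  "Desc u = {w \<in> V. u \<in> set (pth w)}"

definition BE :: "'v \<Rightarrow> 'v set set" where
  "BE u = (\<lambda>w. {par w, w}) ` Desc u"

lemma Desc_self: "u \<in> V \<Longrightarrow> u \<in> Desc u"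
  using self_in_pth by (simp add: Desc_def)

lemma Desc_V: "Desc u \<subseteq> V"
  by (auto simp: Desc_def)

lemma finite_Desc: "finite (Desc u)"
  using finV Desc_V finite_subset by blast

lemma Desc_notrho: "u \<noteq> \<rho> \<Longrightarrow> w \<in> Desc u \<Longrightarrow> w \<noteq> \<rho>"
  using pth_rho by (auto simp: Desc_def)

lemma Ch_props: "w \<in> Ch u \<Longrightarrow> w \<in> V \<and> w \<noteq> \<rho> \<and> par w = u"
  by (simp add: Ch_def)

lemma Ch_Desc: assumes "w \<in> Ch u" shows "Desc w \<subseteq> Desc u" "u \<notin> Desc w"
proof -
  have w: "w \<in> V" "w \<noteq> \<rho>" "par w = u" using Ch_props[OF assms] by auto
  show "Desc w \<subseteq> Desc u"
  proof
    fix z assume "z \<in> Desc w"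
    then have z: "z \<in> V" "w \<in> set (pth z)" by (auto simp: Desc_def)
    have "u \<in> set (pth w)" using par_in_pth w by metis
    then show "z \<in> Desc u" using anc_trans[OF z] z by (auto simp: Desc_def)
  qed
  show "u \<notin> Desc w" using not_in_pth_par[OF w(1,2)] w(3) by (auto simp: Desc_def)
qed

lemma pth_snoc_par: assumes "w \<in> V" "pth w = ys @ [u, w]" shows "w \<noteq> \<rho>" "par w = u"
proof -
  show wr: "w \<noteq> \<rho>" using assms(2) pth_rho by auto
  have "pth (par w) @ [w] = (ys @ [u]) @ [w]" using assms(2) pth_par(1)[OF assms(1) wr] by simp
  then have "pth (par w) = ys @ [u]" by simp
  then have "last (pth (par w)) = u" by simp
  then show "par w = u" using pth(3)[OF pth_par(2)[OF assms(1) wr]] by simp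
qed

lemma Desc_split: assumes "u \<in> V" "v \<in> Desc u" "v \<noteq> u" shows "\<exists>w\<in>Ch u. v \<in> Desc w"
proof -
  have v: "v \<in> V" "u \<in> set (pth v)" using assms(2) by (auto simp: Desc_def)
  obtain xs ys where sp: "pth v = xs @ u # ys" using v(2) split_list by metis
  have "ys \<noteq> []" using sp pth(3)[OF v(1)] assms(3) by auto
  then obtain w ys' where ys: "ys = w # ys'" by (cases ys) auto
  have pw: "pth w = xs @ [u, w]" using pth_prefix[OF v(1), of "xs @ [u]" w ys'] sp ys by simp
  have wV: "w \<in> V" using sp ys pth_set[OF v(1)] by auto
  have "w \<in> Ch u" using pth_snoc_par[OF wV pw] wV by (simp add: Ch_def)
  moreover have "v \<in> Desc w" using sp ys v by (simp add: Desc_def)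
  ultimately show ?thesis by blast
qed

lemma Desc_disj: assumes "w \<in> Ch u" "w' \<in> Ch u" "z \<in> Desc w" "z \<in> Desc w'" shows "w = w'"
proof -
  have w: "w \<in> V" "w \<noteq> \<rho>" "par w = u" "w' \<in> V" "w' \<noteq> \<rho>" "par w' = u"
    using Ch_props assms(1,2) by auto
  have z: "z \<in> V" "w \<in> set (pth z)" "w' \<in> set (pth z)" using assms(3,4) by (auto simp: Desc_def)
  obtain ys ys' where "pth z = pth w @ ys" "pth z = pth w' @ ys'" using anc_prefix z by metis
  then have "pth u @ w # ys = pth u @ w' # ys'" using pth_par(1)[of w] pth_par(1)[of w'] w by simp
  then show ?thesis by simp
qed

lemma BE_mem: "w \<noteq> \<rho> \<Longrightarrow> v \<in> V \<Longrightarrow> v \<noteq> \<rho> \<Longrightarrow> {par v, v} \<in> BE w \<longleftrightarrow> v \<in> Desc w"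
proof
  assume a: "w \<noteq> \<rho>" "v \<in> V" "v \<noteq> \<rho>" "{par v, v} \<in> BE w"
  then obtain z where z: "z \<in> Desc w" "{par v, v} = {par z, z}" by (auto simp: BE_def)
  have "z \<in> V" "z \<noteq> \<rho>" using z Desc_V Desc_notrho a by auto
  then have "v = z" using par_edge_inj a z by metis
  then show "v \<in> Desc w" using z by simp
qed (auto simp: BE_def)

lemma Desc_Ch: assumes "v \<in> Desc w" "z \<in> Ch v" shows "z \<in> Desc w"
proof -
  have z: "z \<in> V" "z \<noteq> \<rho>" "par z = v" using Ch_props[OF assms(2)] by auto
  have "set (pth v) \<subseteq> set (pth z)" using pth_par(1)[OF z(1,2)] z(3) by auto
  then show ?thesis using assms(1) z by (auto simp: Desc_def)
qed

lemma BE_edges: assumes "v \<in> Desc w"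
  shows "{par v, v} \<in> BE w" "\<And>z. z \<in> Ch v \<Longrightarrow> {v, z} \<in> BE w"
proof -
  show "{par v, v} \<in> BE w" using assms by (auto simp: BE_def)
  fix z assume z: "z \<in> Ch v"
  then have "{v, z} = {par z, z}" using Ch_edge by blast
  then show "{v, z} \<in> BE w" using Desc_Ch[OF assms z] by (auto simp: BE_def)
qed

lemma adjust:
  fixes L :: "'g::ab_group_add \<Rightarrow> 'l" and h :: "'v set \<Rightarrow> 'g"
  assumes fr: "friendly L"
  shows "u \<in> V \<Longrightarrow> u \<noteq> \<rho> \<Longrightarrow> (\<forall>v\<in>Desc u. cons_at h v) \<Longrightarrow> L g = L (h {par u, u}) \<Longrightarrow>
    \<exists>h'. h' {par u, u} = g \<and> (\<forall>w\<in>Desc u. L (h' {par w, w}) = L (h {par w, w}))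
       \<and> (\<forall>v\<in>Desc u. cons_at h' v) \<and> (\<forall>x. x \<notin> BE u \<longrightarrow> h' x = h x)"
proof (induction "card (Desc u)" arbitrary: u h g rule: less_induct)
  case less
  note uV = less.prems(1) and ur = less.prems(2) and cons = less.prems(3) and Lg = less.prems(4)
  have uD: "u \<in> Desc u" using Desc_self uV by blast
  show ?case
  proof (cases "Ch u = {}")
    case True
    have D: "Desc u = {u}" using Desc_split[OF uV] True uD by blast
    define h' where "h' = h({par u, u} := g)"
    have "cons_at h' u" using True by (simp add: cons_at_def)
    moreover have "\<forall>x. x \<notin> BE u \<longrightarrow> h' x = h x" using D by (simp add: h'_def BE_def)
    ultimately show ?thesis using D Lg by (intro exI[of _ h']) (simp add: h'_def)
  next
    case False
    obtain ws where ws: "distinct ws" "set ws = Ch u" using finite_distinct_list finite_Ch by metis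
    define k where "k = length ws"
    have k1: "k \<ge> 1" using False ws k_def by (cases ws) auto
    have cu: "h {par u, u} = (\<Sum>w\<in>Ch u. h {u, w})" using cons uD False by (simp add: cons_at_def)
    define gs where "gs = map (\<lambda>w. h {u, w}) ws @ [h {par u, u}]"
    have gsZ: "gs \<in> Zm (Suc k)"
      unfolding Zm_def gs_def k_def using cu ws by (simp add: sum_list_distinct_conv_sum_set)
    have gsk: "gs ! k = h {par u, u}" by (simp add: gs_def k_def nth_append)
    obtain gs' where gs': "gs' \<in> Zm (Suc k)" "map L gs' = map L gs" "gs' ! k = g"
    proof (cases "k \<ge> 2")
      case True
      then have "m_friendly (Suc k) L" using fr by (simp add: friendly_def)
      then have mf: "\<forall>l \<in> map L ` Zm (Suc k). \<forall>i < Suc k.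
          {gs0 ! i | gs0. gs0 \<in> Zm (Suc k) \<and> map L gs0 = l} = {g'. L g' = l ! i}"
        unfolding m_friendly_def .
      have "map L gs \<in> map L ` Zm (Suc k)" using gsZ by blast
      from bspec[OF mf this] have "\<forall>i < Suc k.
          {gs0 ! i | gs0. gs0 \<in> Zm (Suc k) \<and> map L gs0 = map L gs} = {g'. L g' = map L gs ! i}" .
      then have "{gs0 ! k | gs0. gs0 \<in> Zm (Suc k) \<and> map L gs0 = map L gs} = {g'. L g' = map L gs ! k}"
        by simp
      moreover have "map L gs ! k = L g" using gsk Lg gsZ by (simp add: Zm_def)
      ultimately have "g \<in> {gs' ! k | gs'. gs' \<in> Zm (Suc k) \<and> map L gs' = map L gs}" by simp
      then show ?thesis using that by blast
    next
      case False
      then have k: "k = 1" using k1 by simp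
      then obtain w0 where w0: "ws = [w0]" using k_def by (cases ws) auto
      have "Ch u = {w0}" using ws w0 by simp
      then have "h {par u, u} = h {u, w0}" using cu by simp
      then have "map L [g, g] = map L gs" using Lg w0 by (simp add: gs_def)
      moreover have "[g, g] \<in> Zm (Suc k)" using k by (simp add: Zm_def)
      ultimately show ?thesis using that k by simp
    qed
    have lgs': "length gs' = Suc k" using gs'(1) by (simp add: Zm_def)
    have chi: "ws ! i \<in> Ch u" if "i < k" for i
    proof -
      have "ws ! i \<in> set ws" using that k_def by simp
      then show ?thesis using ws(2) by simp
    qed
    have "\<forall>i. \<exists>hi. i < k \<longrightarrow> (hi {par (ws ! i), ws ! i} = gs' ! i \<and>
        (\<forall>w\<in>Desc (ws ! i). L (hi {par w, w}) = L (h {par w, w})) \<and>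
        (\<forall>v\<in>Desc (ws ! i). cons_at hi v) \<and> (\<forall>x. x \<notin> BE (ws ! i) \<longrightarrow> hi x = h x))"
    proof (intro allI impI)
      fix i
      show "\<exists>hi. i < k \<longrightarrow> (hi {par (ws ! i), ws ! i} = gs' ! i \<and>
        (\<forall>w\<in>Desc (ws ! i). L (hi {par w, w}) = L (h {par w, w})) \<and>
        (\<forall>v\<in>Desc (ws ! i). cons_at hi v) \<and> (\<forall>x. x \<notin> BE (ws ! i) \<longrightarrow> hi x = h x))"
      proof (cases "i < k")
        case True
        let ?w = "ws ! i"
        have w: "?w \<in> V" "?w \<noteq> \<rho>" "par ?w = u" using Ch_props chi[OF True] by auto
        have "Desc ?w \<subset> Desc u" using Ch_Desc[OF chi[OF True]] uD by blast
        then have card: "card (Desc ?w) < card (Desc u)" using finite_Desc psubset_card_mono by blast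
        have c2: "\<forall>v\<in>Desc ?w. cons_at h v" using cons Ch_Desc[OF chi[OF True]] by blast
        have "L (gs' ! i) = L (gs ! i)" using gs'(2) True lgs'
          by (metis length_map lessI less_trans nth_map)
        also have "gs ! i = h {u, ?w}" using True by (simp add: gs_def k_def nth_append)
        finally have "L (gs' ! i) = L (h {par ?w, ?w})" using w(3) by simp
        then show ?thesis using less.hyps[OF card w(1,2) c2] by blast
      qed simp
    qed
    then obtain H where H: "\<And>i. i < k \<Longrightarrow> H i {par (ws ! i), ws ! i} = gs' ! i \<and>
        (\<forall>w\<in>Desc (ws ! i). L (H i {par w, w}) = L (h {par w, w})) \<and>
        (\<forall>v\<in>Desc (ws ! i). cons_at (H i) v) \<and> (\<forall>x. x \<notin> BE (ws ! i) \<longrightarrow> H i x = h x)"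
      using choice[of "\<lambda>i hi. i < k \<longrightarrow> (hi {par (ws ! i), ws ! i} = gs' ! i \<and>
        (\<forall>w\<in>Desc (ws ! i). L (hi {par w, w}) = L (h {par w, w})) \<and>
        (\<forall>v\<in>Desc (ws ! i). cons_at hi v) \<and> (\<forall>x. x \<notin> BE (ws ! i) \<longrightarrow> hi x = h x))"] by metis
    have BEdisj: "i = j" if bi: "i < k" "j < k" "x \<in> BE (ws ! i)" "x \<in> BE (ws ! j)" for i j x
    proof -
      obtain z where z1: "z \<in> Desc (ws ! i)" "x = {par z, z}"
        using bi(3) unfolding BE_def by blast
      obtain z' where z2: "z' \<in> Desc (ws ! j)" "x = {par z', z'}"
        using bi(4) unfolding BE_def by blast
      note z = z1 z2
      have "z \<in> V" "z \<noteq> \<rho>" "z' \<in> V" "z' \<noteq> \<rho>"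
        using z Desc_V Desc_notrho Ch_props chi bi by blast+
      then have "z = z'" using par_edge_inj z by metis
      then have "ws ! i = ws ! j" using Desc_disj chi bi z by metis
      then show ?thesis using ws(1) bi k_def nth_eq_iff_index_eq by metis
    qed
    have notpu: "{par u, u} \<notin> BE (ws ! i)" if "i < k" for i
      using BE_mem[of "ws ! i" u] Ch_Desc(2)[OF chi[OF that]] Ch_props chi[OF that] uV ur by blast
    define h' where "h' x = (if x = {par u, u} then g
        else if \<exists>i<k. x \<in> BE (ws ! i) then H (SOME i. i < k \<and> x \<in> BE (ws ! i)) x else h x)" for x
    have h'i: "h' x = H i x" if "i < k" "x \<in> BE (ws ! i)" for i x
    proof -
      have "x \<noteq> {par u, u}" using notpu that by blast
      moreover have "(SOME i. i < k \<and> x \<in> BE (ws ! i)) = i"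
        using BEdisj that by (intro some_equality) auto
      ultimately show ?thesis using that by (auto simp: h'_def)
    qed
    have inDesc: "\<exists>i<k. v \<in> Desc (ws ! i)" if vi: "v \<in> Desc u" "v \<noteq> u" for v
    proof -
      obtain w where "w \<in> Ch u" "v \<in> Desc w" using Desc_split[OF uV vi] by blast
      then show ?thesis using ws k_def by (metis in_set_conv_nth)
    qed
    have P1: "h' {par u, u} = g" by (simp add: h'_def)
    have P2: "\<forall>w\<in>Desc u. L (h' {par w, w}) = L (h {par w, w})"
    proof
      fix w assume wD: "w \<in> Desc u"
      show "L (h' {par w, w}) = L (h {par w, w})"
      proof (cases "w = u")
        case True then show ?thesis using P1 Lg by simp
      next
        case False
        then obtain i where i: "i < k" "w \<in> Desc (ws ! i)" using inDesc wD by blast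
        then have "h' {par w, w} = H i {par w, w}" using h'i BE_edges(1) by blast
        then show ?thesis using H[OF i(1)] i(2) by simp
      qed
    qed
    have P3: "\<forall>v\<in>Desc u. cons_at h' v"
    proof
      fix v assume vD: "v \<in> Desc u"
      show "cons_at h' v"
      proof (cases "v = u")
        case True
        have m: "map (\<lambda>w. h' {u, w}) ws = butlast gs'"
        proof (rule nth_equalityI)
          show "length (map (\<lambda>w. h' {u, w}) ws) = length (butlast gs')" using lgs' k_def by simp
          fix i assume "i < length (map (\<lambda>w. h' {u, w}) ws)"
          then have i: "i < k" by (simp add: k_def)
          have e: "{u, ws ! i} = {par (ws ! i), ws ! i}" using Ch_props chi[OF i] by simp
          have "ws ! i \<in> Desc (ws ! i)" using Desc_self Ch_props chi[OF i] by blast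
          then have "h' {u, ws ! i} = H i {u, ws ! i}" using h'i[OF i] BE_edges(1) e by metis
          also have "\<dots> = gs' ! i" using H[OF i] e by simp
          finally show "map (\<lambda>w. h' {u, w}) ws ! i = butlast gs' ! i"
            using i lgs' k_def by (simp add: nth_butlast)
        qed
        have "(\<Sum>w\<in>Ch u. h' {u, w}) = sum_list (map (\<lambda>w. h' {u, w}) ws)"
          using ws by (simp add: sum_list_distinct_conv_sum_set)
        also have "\<dots> = last gs'" using m gs'(1) by (simp add: Zm_def)
        also have "\<dots> = g"
        proof -
          have "gs' \<noteq> []" using lgs' by auto
          then have "last gs' = gs' ! (length gs' - 1)" by (rule last_conv_nth)
          then show ?thesis using gs'(3) lgs' by simp
        qed
        finally show ?thesis using True P1 by (simp add: cons_at_def)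
      next
        case False
        then obtain i where i: "i < k" "v \<in> Desc (ws ! i)" using inDesc vD by blast
        have "cons_at h' v = cons_at (H i) v"
        proof (rule cons_at_cong)
          show "h' {par v, v} = H i {par v, v}" using h'i[OF i(1)] BE_edges(1)[OF i(2)] by blast
          fix z assume "z \<in> Ch v"
          then show "h' {v, z} = H i {v, z}" using h'i[OF i(1)] BE_edges(2)[OF i(2)] by blast
        qed
        then show ?thesis using H[OF i(1)] i(2) by blast
      qed
    qed
    have P4: "\<forall>x. x \<notin> BE u \<longrightarrow> h' x = h x"
    proof (intro allI impI)
      fix x assume x: "x \<notin> BE u"
      have "x \<noteq> {par u, u}" using x uD by (auto simp: BE_def)
      moreover have "x \<notin> BE (ws ! i)" if "i < k" for i
        using x Ch_Desc(1)[OF chi[OF that]] by (auto simp: BE_def)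
      ultimately show "h' x = h x" by (auto simp: h'_def)
    qed
    show ?thesis using P1 P2 P3 P4 by blast
  qed
qed

end



context rt begin

lemma set_tl_pth: assumes "w \<in> V" shows "set (tl (pth w)) = set (pth w) - {\<rho>}"
proof -
  obtain t where t: "pth w = \<rho> # t" using pth(2)[OF assms] pth_ne[OF assms] by (cases "pth w") auto
  then have "\<rho> \<notin> set t" using pth_distinct[OF assms] by simp
  then show ?thesis using t by auto
qed

lemma pedges_pth_iff: assumes "w \<in> V" "b \<in> V" "b \<noteq> \<rho>"
  shows "{par b, b} \<in> pedges (pth w) \<longleftrightarrow> b \<in> set (pth w)"
proof -
  have pe: "pedges (pth w) = (\<lambda>z. {par z, z}) ` (set (pth w) - {\<rho>})"
    using pedges_pth[OF assms(1), of "[]" "pth w"] set_tl_pth[OF assms(1)] by simp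
  show ?thesis
  proof
    assume "{par b, b} \<in> pedges (pth w)"
    then obtain z where z: "z \<in> set (pth w)" "z \<noteq> \<rho>" "{par b, b} = {par z, z}" using pe by auto
    have "z \<in> V" using z pth_set[OF assms(1)] by blast
    then have "z = b" using par_edge_inj[OF assms(2,3)] z by metis
    then show "b \<in> set (pth w)" using z by simp
  next
    assume "b \<in> set (pth w)"
    then show "{par b, b} \<in> pedges (pth w)" using pe assms(3) by auto
  qed
qed

lemma below_iff: assumes "b \<in> V" "b \<noteq> \<rho>"
  shows "below E \<rho> {par b, b} c \<longleftrightarrow> c \<in> BE b"
proof
  assume "below E \<rho> {par b, b} c"
  then obtain p where p: "c \<in> E" "vpath E p" "hd p = \<rho>" "length p \<ge> 2"
      "c = {p ! (length p - 2), last p}" "{par b, b} \<in> pedges p"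
    by (auto simp: below_def)
  define w where "w = last p"
  have pw: "pth w = p" using pth_eq p w_def by simp
  have wV: "w \<in> V" using vpath_V[OF p(2)] p(3) rho w_def p(2) by (metis last_in_set subsetD vpath_Nil)
  have wr: "w \<noteq> \<rho>"
  proof
    assume "w = \<rho>" then have "p = [\<rho>]" using pw pth_rho by simp
    then show False using p(4) by simp
  qed
  have "par w = p ! (length p - 2)" unfolding par_def pw using nth_len2[OF p(4)] by simp
  then have c: "c = {par w, w}" using p(5) w_def by simp
  have "b \<in> set (pth w)" using pedges_pth_iff[OF wV assms] p(6) pw by simp
  then have "w \<in> Desc b" using wV by (simp add: Desc_def)
  then show "c \<in> BE b" using c by (auto simp: BE_def)
next
  assume "c \<in> BE b"
  then obtain w where w: "w \<in> Desc b" "c = {par w, w}" by (auto simp: BE_def)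
  have wV: "w \<in> V" and wr: "w \<noteq> \<rho>" using w Desc_V Desc_notrho assms by auto
  have pw: "pth w = pth (par w) @ [w]" using pth_par[OF wV wr] by simp
  have ne: "pth (par w) \<noteq> []" using pth_ne pth_par(2)[OF wV wr] by blast
  have l2: "length (pth w) \<ge> 2" using pw ne by (cases "pth (par w)") auto
  have "pth w ! (length (pth w) - 2) = par w"
    using nth_len2[OF l2] pw pth(3)[OF pth_par(2)[OF wV wr]] by simp
  moreover have "{par b, b} \<in> pedges (pth w)"
    using pedges_pth_iff[OF wV assms] w(1) by (simp add: Desc_def)
  ultimately show "below E \<rho> {par b, b} c" unfolding below_def
    using edge_par[OF wV wr] w(2) pth[OF wV] l2
    by (intro conjI exI[of _ "pth w"]) auto
qed

end

lemma main_proof: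
  fixes L :: "'g::ab_group_add \<Rightarrow> 'l"
    and V :: "'v set" and E :: "'v set set" and \<rho> :: 'v and e :: "'v set"
    and lm lp :: "'v set \<Rightarrow> 'l"
  assumes fr: "friendly L"
    and rt: "is_rtree V E \<rho>"
    and ie: "interior_edge V E \<rho> e"
    and im: "in_im L (\<Union>(minus_edges E \<rho> e)) (minus_edges E \<rho> e) (near_end E \<rho> e) lm"
    and ip: "in_im L (\<Union>(plus_edges E \<rho> e)) (plus_edges E \<rho> e) \<rho> lp"
    and eq: "lm e = lp e"
  shows "in_im L V E \<rho> (\<lambda>e'. if e' \<in> minus_edges E \<rho> e then lm e' else lp e')"
proof -
  interpret rt V E \<rho> using rt by (unfold_locales) (auto simp: is_rtree_def)
  have eE: "e \<in> E" using ie by (simp add: interior_edge_def)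
  obtain b where b: "b \<in> V" "b \<noteq> \<rho>" "e = {par b, b}" using edge_cases[OF eE] by blast
  define a where "a = par b"
  define D where "D = Desc b"
  have aV: "a \<in> V" using pth_par(2)[OF b(1,2)] a_def by simp
  have bD: "b \<in> D" using Desc_self b by (simp add: D_def)
  have bna: "b \<notin> set (pth a)" using not_in_pth_par[OF b(1,2)] a_def by simp
  have aD: "a \<notin> D" using bna by (simp add: D_def Desc_def)
  have DV: "\<And>v. v \<in> D \<Longrightarrow> v \<in> V \<and> v \<noteq> \<rho>" using Desc_V Desc_notrho b(2) D_def by blast
  have BEE: "BE b \<subseteq> E"
  proof
    fix x assume "x \<in> BE b"
    then obtain w where w: "w \<in> Desc b" "x = {par w, w}" by (auto simp: BE_def)
    have "w \<in> V" "w \<noteq> \<rho>" using w(1) Desc_V Desc_notrho[OF b(2)] by auto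
    then show "x \<in> E" using edge_par w(2) by simp
  qed
  have ME: "minus_edges E \<rho> e = BE b"
    unfolding minus_edges_def b(3) below_iff[OF b(1,2)] using BEE by blast
  have PE: "plus_edges E \<rho> e = insert e {c \<in> E. c \<notin> BE b}"
    unfolding plus_edges_def b(3) below_iff[OF b(1,2)] by simp
  have NE: "near_end E \<rho> e = a"
    unfolding near_end_def
  proof (rule the_equality)
    have "e \<notin> pedges (pth a)" using pedges_pth_iff[OF aV b(1,2)] bna b(3) by simp
    then show "a \<in> e \<and> (\<exists>p. vpath E p \<and> hd p = \<rho> \<and> last p = a \<and> e \<notin> pedges p)"
      using pth[OF aV] b(3) a_def by auto
  next
    fix x assume x: "x \<in> e \<and> (\<exists>p. vpath E p \<and> hd p = \<rho> \<and> last p = x \<and> e \<notin> pedges p)"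
    then obtain p where p: "vpath E p" "hd p = \<rho>" "last p = x" "e \<notin> pedges p" by blast
    show "x = a"
    proof (rule ccontr)
      assume "x \<noteq> a"
      then have "x = b" using x b(3) a_def by auto
      then have "p = pth b" using pth_eq p by metis
      then have "e \<in> pedges p" using pedges_pth_iff[OF b(1) b(1,2)] self_in_pth[OF b(1)] b(3) by simp
      then show False using p by simp
    qed
  qed
  have VM: "\<Union>(BE b) = insert a D"
  proof
    show "\<Union>(BE b) \<subseteq> insert a D"
    proof
      fix x assume "x \<in> \<Union>(BE b)"
      then obtain w where w: "w \<in> D" "x = par w \<or> x = w" by (auto simp: BE_def D_def)
      show "x \<in> insert a D"
      proof (cases "x = w")
        case True then show ?thesis using w by simp
      next
        case False
        then have xw: "x = par w" using w by simp
        show ?thesis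
        proof (cases "w = b")
          case True then show ?thesis using xw a_def by simp
        next
          case False
          have wv: "w \<in> V" "w \<noteq> \<rho>" using DV w(1) by auto
          have "b \<in> set (pth w)" using w(1) by (simp add: D_def Desc_def)
          then have "b \<in> set (pth (par w))" using pth_par(1)[OF wv] False by simp
          then show ?thesis using xw pth_par(2)[OF wv] by (simp add: D_def Desc_def)
        qed
      qed
    qed
  next
    show "insert a D \<subseteq> \<Union>(BE b)"
      using bD a_def by (auto simp: BE_def D_def)
  qed
  have eBE: "e \<in> BE b" using bD b(3) by (auto simp: BE_def D_def)
  have outD: "{v, z} = e" if "v \<in> V" "v \<noteq> \<rho>" "v \<notin> D" "z \<in> Ch v" "{v, z} \<in> BE b" for v z
  proof -
    have z: "z \<in> V" "z \<noteq> \<rho>" "par z = v" using Ch_props[OF that(4)] by auto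
    have "{v, z} = {par z, z}" using z by simp
    then have "z \<in> D" using BE_mem[OF b(2) z(1,2)] that(5) by (simp add: D_def)
    then have "b \<in> set (pth z)" by (simp add: D_def Desc_def)
    moreover have "b \<notin> set (pth v)" using that(1,3) by (simp add: D_def Desc_def)
    ultimately have "z = b" using pth_par(1)[OF z(1,2)] z(3) by auto
    then show ?thesis using b(3) z(3) by (simp add: insert_commute)
  qed
  obtain hm where hm: "consistent_assignment (\<Union>(BE b)) (BE b) a hm" "\<forall>x\<in>BE b. lm x = L (hm x)"
    using im unfolding in_im_def ME NE by blast
  define EP where "EP = insert e {c \<in> E. c \<notin> BE b}"
  obtain hp where hp: "consistent_assignment (\<Union>EP) EP \<rho> hp" "\<forall>x\<in>EP. lp x = L (hp x)"
    using ip unfolding in_im_def PE EP_def by blast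
  have EPE: "EP \<subseteq> E" using eE by (auto simp: EP_def)
  have consm: "cons_at hm v" if vD: "v \<in> D" for v
  proof -
    have v: "v \<in> V" "v \<noteq> \<rho>" using DV vD by auto
    have inc: "{c \<in> BE b. v \<in> c} = {c \<in> E. v \<in> c}"
    proof
      show "{c \<in> E. v \<in> c} \<subseteq> {c \<in> BE b. v \<in> c}"
        using incident[OF v(1)] v(2) BE_edges[of v b] vD by (auto simp: D_def)
    qed (use BEE in auto)
    have disj: "set (butlast (pth a)) \<inter> \<Union>(BE b) = {}"
    proof -
      have "z \<notin> insert a D" if z: "z \<in> set (butlast (pth a))" for z
      proof
        assume "z \<in> insert a D"
        have pa: "pth a = butlast (pth a) @ [a]" using pth(3)[OF aV] pth_ne[OF aV] by (metis append_butlast_last_id)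
        then have "z \<noteq> a" using pth_distinct[OF aV] z by (metis distinct_append disjoint_iff list.set_intros(1))
        then have "z \<in> D" using \<open>z \<in> insert a D\<close> by simp
        then have "b \<in> set (pth z)" by (simp add: D_def Desc_def)
        moreover have "set (pth z) \<subseteq> set (pth a)" using anc_trans[OF aV] z in_set_butlastD by metis
        ultimately show False using bna by blast
      qed
      then show ?thesis using VM by blast
    qed
    have pe: "is_parent_edge (BE b) a v c \<longleftrightarrow> c = {par v, v}" for c
    proof
      assume "is_parent_edge (BE b) a v c"
      then show "c = {par v, v}" using parent_sub_a[OF BEE aV disj] by blast
    next
      assume c: "c = {par v, v}"
      have "b \<in> set (pth v)" using vD by (simp add: D_def Desc_def)
      then obtain ys where ys: "pth v = pth b @ ys" using anc_prefix[OF v(1)] by blast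
      have pa: "pth a = butlast (pth a) @ [a]" using pth(3)[OF aV] pth_ne[OF aV] by (metis append_butlast_last_id)
      have pv: "pth v = butlast (pth a) @ (a # b # ys)"
        using ys pth_par(1)[OF b(1,2)] a_def pa by (metis append_Cons append_assoc append_Nil)
      have "pedges (a # b # ys) \<subseteq> BE b"
      proof
        fix x assume "x \<in> pedges (a # b # ys)"
        then obtain z where z: "z \<in> set (b # ys)" "x = {par z, z}" using pedges_pth[OF v(1) pv] by auto
        have zD: "z \<in> D"
        proof (cases "z = b")
          case True then show ?thesis using bD by simp
        next
          case False
          then have "z \<in> set ys" using z by simp
          then obtain ys1 ys2 where "ys = ys1 @ z # ys2" using split_list by metis
          then have "pth z = pth b @ ys1 @ [z]" using pth_prefix[OF v(1), of "pth b @ ys1" z ys2] ys by simp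
          moreover have "z \<in> V" using z pv pth_set[OF v(1)] by auto
          ultimately show ?thesis using self_in_pth[OF b(1)] by (simp add: D_def Desc_def)
        qed
        then show "x \<in> BE b" using z by (auto simp: BE_def D_def)
      qed
      moreover have "v \<noteq> a" using vD aD by blast
      ultimately show "is_parent_edge (BE b) a v c" using parent_sub_b[OF v(1) _ pv] c by simp
    qed
    show ?thesis
      using sub_cons[OF BEE hm(1) v _ _ inc pe] VM vD aD by blast
  qed
  have consp: "cons_at hp v" if v: "v \<in> V" "v \<noteq> \<rho>" "v \<notin> D" for v
  proof -
    have pvn: "{par v, v} \<notin> BE b" using BE_mem[OF b(2) v(1,2)] v(3) by (simp add: D_def)
    have inc: "{c \<in> EP. v \<in> c} = {c \<in> E. v \<in> c}"
    proof
      show "{c \<in> E. v \<in> c} \<subseteq> {c \<in> EP. v \<in> c}"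
      proof
        fix c assume c: "c \<in> {c \<in> E. v \<in> c}"
        show "c \<in> {c \<in> EP. v \<in> c}"
        proof (cases "c \<in> BE b")
          case False then show ?thesis using c by (simp add: EP_def)
        next
          case True
          have "c \<in> {{par v, v}} \<union> (\<lambda>w. {v, w}) ` Ch v" using incident[OF v(1)] v(2) c by auto
          then have "c = e" using True pvn outD v by auto
          then show ?thesis using c by (simp add: EP_def)
        qed
      qed
    qed (use EPE in auto)
    have pe: "is_parent_edge EP \<rho> v c \<longleftrightarrow> c = {par v, v}" for c
    proof
      assume "is_parent_edge EP \<rho> v c"
      then show "c = {par v, v}" using parent_sub_a[OF EPE rho] pth_rho by simp
    next
      assume c: "c = {par v, v}"
      have "pedges (pth v) \<subseteq> EP"
      proof
        fix x assume "x \<in> pedges (pth v)"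
        then obtain z where z: "z \<in> set (pth v)" "z \<noteq> \<rho>" "x = {par z, z}"
          using pedges_pth[OF v(1), of "[]"] set_tl_pth[OF v(1)] by auto
        have zV: "z \<in> V" using z pth_set[OF v(1)] by blast
        have "z \<notin> D"
        proof
          assume "z \<in> D"
          then have "b \<in> set (pth z)" by (simp add: D_def Desc_def)
          then have "b \<in> set (pth v)" using anc_trans[OF v(1) z(1)] by blast
          then show False using v by (simp add: D_def Desc_def)
        qed
        then have "x \<notin> BE b" using BE_mem[OF b(2) zV z(2)] z(3) by (simp add: D_def)
        then show "x \<in> EP" using edge_par[OF zV z(2)] z(3) by (simp add: EP_def)
      qed
      then show "is_parent_edge EP \<rho> v c"
        using parent_sub_b[OF v(1) v(2), of "[]" "pth v" EP] pth[OF v(1)] pth_ne[OF v(1)] c by simp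
    qed
    have "{par v, v} \<in> EP" using pvn edge_par[OF v(1,2)] by (simp add: EP_def)
    then have "v \<in> \<Union>EP" by blast
    then show ?thesis using sub_cons[OF EPE hp(1) v(1,2) _ v(2) inc pe] by blast
  qed
  define g where "g = hp e"
  have eEP: "e \<in> EP" by (simp add: EP_def)
  have Lg: "L g = L (hm {par b, b})" using hm(2) hp(2) eq eBE eEP b(3) g_def by metis
  obtain h' where h': "h' {par b, b} = g" "\<forall>w\<in>Desc b. L (h' {par w, w}) = L (hm {par w, w})"
      "\<forall>v\<in>Desc b. cons_at h' v"
  proof -
    have cm: "\<forall>v\<in>Desc b. cons_at hm v" using consm by (simp add: D_def)
    show ?thesis using adjust[OF fr b(1,2) cm Lg] that by blast
  qed
  define H where "H x = (if x \<in> BE b then h' x else hp x)" for x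
  have cons: "consistent_assignment V E \<rho> H"
  proof (rule cons_consistent, intro ballI impI)
    fix v assume v: "v \<in> V" "v \<noteq> \<rho>"
    show "cons_at H v"
    proof (cases "v \<in> D")
      case True
      have "cons_at H v = cons_at h' v"
        using BE_edges[of v b] True by (intro cons_at_cong) (auto simp: H_def D_def)
      then show ?thesis using h'(3) True by (simp add: D_def)
    next
      case False
      have pvn: "{par v, v} \<notin> BE b" using BE_mem[OF b(2) v(1,2)] False by (simp add: D_def)
      have "cons_at H v = cons_at hp v"
      proof (rule cons_at_cong)
        show "H {par v, v} = hp {par v, v}" using pvn by (simp add: H_def)
        fix z assume z: "z \<in> Ch v"
        show "H {v, z} = hp {v, z}"
        proof (cases "{v, z} \<in> BE b")
          case True
          then have "{v, z} = e" using outD v False z by blast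
          then show ?thesis using True h'(1) b(3) g_def by (simp add: H_def)
        qed (simp add: H_def)
      qed
      then show ?thesis using consp v False by simp
    qed
  qed
  show ?thesis
    unfolding in_im_def
  proof (intro exI conjI ballI)
    show "consistent_assignment V E \<rho> H" by (rule cons)
    fix x assume xE: "x \<in> E"
    show "(if x \<in> minus_edges E \<rho> e then lm x else lp x) = L (H x)"
    proof (cases "x \<in> BE b")
      case True
      then obtain w where w: "w \<in> Desc b" "x = {par w, w}" by (auto simp: BE_def)
      then show ?thesis using True ME hm(2) h'(2) by (simp add: H_def)
    next
      case False
      then have "x \<in> EP" using xE by (simp add: EP_def)
      then show ?thesis using False ME hp(2) by (simp add: H_def)
    qed
  qed
qed



theorem lemma3p6:
  fixes L :: "'g::{ab_group_add, finite} \<Rightarrow> 'l::finite"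
    and V :: "'v set" and E :: "'v set set" and \<rho> :: 'v and e :: "'v set"
    and lm lp :: "'v set \<Rightarrow> 'l"
  assumes "friendly L"
    and "is_rtree V E \<rho>"
    and "interior_edge V E \<rho> e"
    and "in_im L (\<Union>(minus_edges E \<rho> e)) (minus_edges E \<rho> e) (near_end E \<rho> e) lm"
    and "in_im L (\<Union>(plus_edges E \<rho> e)) (plus_edges E \<rho> e) \<rho> lp"
    and "lm e = lp e"
  shows "in_im L V E \<rho> (\<lambda>e'. if e' \<in> minus_edges E \<rho> e then lm e' else lp e')"
  using main_proof[OF assms] .

end
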